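(* For every pure context $F$, term $t$ and variable $x\notin\mathrm{fv}(F)$, we have $\langle (\lambda x.\langle F[x]\rangle)\,t\rangle \sim \langle F[t]\rangle$.
   Context: The calculus $\lambda_{\mathcal S}$. Terms: $t ::= x \mid \lambda x.t \mid t\,t \mid \mathcal{S}k.t \mid \langle t\rangle$ (shift and reset); values: $v ::= \lambda x.t \mid x$. $\lambda x.t$ binds $x$, $\mathcal{S}k.t$ binds $k$; terms up to $\alpha$-conversion; $\mathrm{fv}$ free variables; capture-avoiding substitution $t\{v/x\}$. Pure contexts $F ::= [\,] \mid v\,F \mid F\,t$; evaluation contexts $E ::= [\,] \mid v\,E \mid E\,t \mid \langle E\rangle$. Reduction: $E[(\lambda x.t)\,v] \to E[t\{v/x\}]$; $E[\langle F[\mathcal{S}k.t]\rangle] \to E[\langle t\{\lambda x.\langle F[x]\rangle/k\}\rangle]$ ($x\notin\mathrm{fv}(F)$); $E[\langle v\rangle]\to E[v]$. $t\Downarrow t'$ iff $t\to^*t'$ and $t'$ irreducible. Normal forms: values, control stuck terms $F[\mathcal{S}k.t]$, open stuck terms $E[x\,v]$. Fresh: not free in the terms/contexts considered. Normal form bisimilarity $\sim$: for a relation $\mathcal R$ on terms, $E_0\mathrel{\mathcal R}E_1$ iff either $E_0=E_0'[\langle F_0\rangle]$, $E_1=E_1'[\langle F_1\rangle]$ ($F_i$ pure) with $E_0'[x]\mathrel{\mathcal R}E_1'[x]$ and $\langle F_0[x]\rangle\mathrel{\mathcal R}\langle F_1[x]\rangle$ ($x$ fresh), or $E_0=F_0$,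 $E_1=F_1$ pure with $F_0[x]\mathrel{\mathcal R}F_1[x]$ ($x$ fresh). $v\mathbin{@}y$ is $x\,y$ if $v=x$, $t\{y/x\}$ if $v=\lambda x.t$. $\mathcal R^{\mathrm{nf}}$ on normal forms: $v_0\mathrel{\mathcal R^{\mathrm{nf}}}v_1$ if $v_0\mathbin{@}x\mathrel{\mathcal R}v_1\mathbin{@}x$ ($x$ fresh); $F_0[\mathcal{S}k.t_0]\mathrel{\mathcal R^{\mathrm{nf}}}F_1[\mathcal{S}k.t_1]$ if $F_0\mathrel{\mathcal R}F_1$ and $\langle t_0\rangle\mathrel{\mathcal R}\langle t_1\rangle$; $E_0[x\,v_0]\mathrel{\mathcal R^{\mathrm{nf}}}E_1[x\,v_1]$ if $E_0\mathrel{\mathcal R}E_1$ and $v_0\mathrel{\mathcal R^{\mathrm{nf}}}v_1$. $\mathcal R$ is a normal form simulation if $t_0\mathrel{\mathcal R}t_1$ and $t_0\Downarrow t_0'$ imply $t_1\Downarrow t_1'$ with $t_0'\mathrel{\mathcal R^{\mathrm{nf}}}t_1'$; a bisimulation if $\mathcal R$ and $\mathcal R^{-1}$ are simulations; $\sim$ is the largest normal form bisimulation. *)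

theory Defs
  imports Main
begin

section \<open>Terms of lambda_S (de Bruijn representation, so terms are taken up to alpha)\<close>

datatype trm = Var nat | Lam trm | App trm trm | Shift trm | Reset trm

text \<open>Shift (S k. t) binds k as index 0 of its body; Lam binds x as index 0.\<close>

fun lift :: "nat \<Rightarrow> trm \<Rightarrow> trm" where
  "lift k (Var i) = Var (if i < k then i else Suc i)"
| "lift k (Lam t) = Lam (lift (Suc k) t)"
| "lift k (App t u) = App (lift k t) (lift k u)"
| "lift k (Shift t) = Shift (lift (Suc k) t)"
| "lift k (Reset t) = Reset (lift k t)"

fun subst :: "trm \<Rightarrow> nat \<Rightarrow> trm \<Rightarrow> trm" where
  "subst (Var i) k s = (if i < k then Var i else if i = k then s else Var (i - 1))"
| "subst (Lam t) k s = Lam (subst t (Suc k) (lift 0 s))"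
| "subst (App t u) k s = App (subst t k s) (subst u k s)"
| "subst (Shift t) k s = Shift (subst t (Suc k) (lift 0 s))"
| "subst (Reset t) k s = Reset (subst t k s)"

fun is_val :: "trm \<Rightarrow> bool" where
  "is_val (Var _) = True"
| "is_val (Lam _) = True"
| "is_val _ = False"

datatype ctx = Hole | CArg trm ctx | CFun ctx trm | CReset ctx

fun plug :: "ctx \<Rightarrow> trm \<Rightarrow> trm" where
  "plug Hole t = t"
| "plug (CArg v E) t = App v (plug E t)"
| "plug (CFun E u) t = App (plug E t) u"
| "plug (CReset E) t = Reset (plug E t)"

fun is_ectx :: "ctx \<Rightarrow> bool" where
  "is_ectx Hole = True"
| "is_ectx (CArg v E) = (is_val v \<and> is_ectx E)"
| "is_ectx (CFun E u) = is_ectx E"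
| "is_ectx (CReset E) = is_ectx E"

fun is_pure :: "ctx \<Rightarrow> bool" where
  "is_pure Hole = True"
| "is_pure (CArg v E) = (is_val v \<and> is_pure E)"
| "is_pure (CFun E u) = is_pure E"
| "is_pure (CReset E) = False"

fun ctx_comp :: "ctx \<Rightarrow> ctx \<Rightarrow> ctx" where
  "ctx_comp Hole E' = E'"
| "ctx_comp (CArg v E) E' = CArg v (ctx_comp E E')"
| "ctx_comp (CFun E u) E' = CFun (ctx_comp E E') u"
| "ctx_comp (CReset E) E' = CReset (ctx_comp E E')"

fun lift_ctx :: "nat \<Rightarrow> ctx \<Rightarrow> ctx" where
  "lift_ctx k Hole = Hole"
| "lift_ctx k (CArg v E) = CArg (lift k v) (lift_ctx k E)"
| "lift_ctx k (CFun E u) = CFun (lift_ctx k E) (lift k u)"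
| "lift_ctx k (CReset E) = CReset (lift_ctx k E)"

text \<open>C[x] for a fresh variable x: shift all free indices of C and plug index 0.\<close>
definition plug_fresh :: "ctx \<Rightarrow> trm" where
  "plug_fresh C = plug (lift_ctx 0 C) (Var 0)"

inductive step :: "trm \<Rightarrow> trm \<Rightarrow> bool" where
  beta: "is_ectx E \<Longrightarrow> is_val v \<Longrightarrow>
           step (plug E (App (Lam t) v)) (plug E (subst t 0 v))"
| shift: "is_ectx E \<Longrightarrow> is_pure F \<Longrightarrow>
           step (plug E (Reset (plug F (Shift t))))
                (plug E (Reset (subst t 0 (Lam (Reset (plug_fresh F))))))"
| reset: "is_ectx E \<Longrightarrow> is_val v \<Longrightarrow>
           step (plug E (Reset v)) (plug E v)"

definition irreducible :: "trm \<Rightarrow> bool" where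
  "irreducible t \<longleftrightarrow> (\<nexists>u. step t u)"

definition eval :: "trm \<Rightarrow> trm \<Rightarrow> bool" where
  "eval t t' \<longleftrightarrow> step\<^sup>*\<^sup>* t t' \<and> irreducible t'"

text \<open>v @ y for a fresh variable y.\<close>
fun app_fresh :: "trm \<Rightarrow> trm" where
  "app_fresh (Var n) = App (Var (Suc n)) (Var 0)"
| "app_fresh (Lam t) = t"
| "app_fresh t = t"

definition ctx_rel :: "(trm \<Rightarrow> trm \<Rightarrow> bool) \<Rightarrow> ctx \<Rightarrow> ctx \<Rightarrow> bool" where
  "ctx_rel R E0 E1 \<longleftrightarrow>
     (\<exists>E0' F0 E1' F1. is_ectx E0' \<and> is_pure F0 \<and> is_ectx E1' \<and> is_pure F1 \<and>
        E0 = ctx_comp E0' (CReset F0) \<and> E1 = ctx_comp E1' (CReset F1) \<and>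
        R (plug_fresh E0') (plug_fresh E1') \<and>
        R (Reset (plug_fresh F0)) (Reset (plug_fresh F1)))
   \<or> (is_pure E0 \<and> is_pure E1 \<and> R (plug_fresh E0) (plug_fresh E1))"

definition val_rel :: "(trm \<Rightarrow> trm \<Rightarrow> bool) \<Rightarrow> trm \<Rightarrow> trm \<Rightarrow> bool" where
  "val_rel R v0 v1 \<longleftrightarrow> is_val v0 \<and> is_val v1 \<and> R (app_fresh v0) (app_fresh v1)"

definition nf_rel :: "(trm \<Rightarrow> trm \<Rightarrow> bool) \<Rightarrow> trm \<Rightarrow> trm \<Rightarrow> bool" where
  "nf_rel R a b \<longleftrightarrow>
     val_rel R a b
   \<or> (\<exists>F0 t0 F1 t1. is_pure F0 \<and> is_pure F1 \<and>
        a = plug F0 (Shift t0) \<and> b = plug F1 (Shift t1) \<and>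
        ctx_rel R F0 F1 \<and> R (Reset t0) (Reset t1))
   \<or> (\<exists>E0 x v0 E1 v1. is_ectx E0 \<and> is_ectx E1 \<and>
        a = plug E0 (App (Var x) v0) \<and> b = plug E1 (App (Var x) v1) \<and>
        ctx_rel R E0 E1 \<and> val_rel R v0 v1)"

definition nf_simulation :: "(trm \<Rightarrow> trm \<Rightarrow> bool) \<Rightarrow> bool" where
  "nf_simulation R \<longleftrightarrow>
     (\<forall>t0 t1 t0'. R t0 t1 \<longrightarrow> eval t0 t0' \<longrightarrow> (\<exists>t1'. eval t1 t1' \<and> nf_rel R t0' t1'))"

definition nf_bisimulation :: "(trm \<Rightarrow> trm \<Rightarrow> bool) \<Rightarrow> bool" where
  "nf_bisimulation R \<longleftrightarrow> nf_simulation R \<and> nf_simulation R\<inverse>\<inverse>"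

definition nf_bisimilar :: "trm \<Rightarrow> trm \<Rightarrow> bool" (infix "\<approx>nf" 50) where
  "t0 \<approx>nf t1 \<longleftrightarrow> (\<exists>R. nf_bisimulation R \<and> R t0 t1)"

end

theory Submission
  imports Defs
begin


lemma lift_lift: "i \<le> j \<Longrightarrow> lift (Suc j) (lift i t) = lift i (lift j t)"
  by (induction t arbitrary: i j) auto

lemma subst_lift: "subst (lift k t) k s = t"
  by (induction t arbitrary: k s) auto

lemma lift_subst: "j \<le> k \<Longrightarrow> lift j (subst t k s) = subst (lift j t) (Suc k) (lift j s)"
  by (induction t arbitrary: j k s) (auto simp: lift_lift)

fun subst_ctx :: "ctx \<Rightarrow> nat \<Rightarrow> trm \<Rightarrow> ctx" where
  "subst_ctx Hole k s = Hole"
| "subst_ctx (CArg v E) k s = CArg (subst v k s) (subst_ctx E k s)"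
| "subst_ctx (CFun E u) k s = CFun (subst_ctx E k s) (subst u k s)"
| "subst_ctx (CReset E) k s = CReset (subst_ctx E k s)"

lemma plug_comp[simp]: "plug (ctx_comp E E') t = plug E (plug E' t)"
  by (induction E) auto

lemma lift_plug[simp]: "lift k (plug E t) = plug (lift_ctx k E) (lift k t)"
  by (induction E) auto

lemma subst_plug[simp]: "subst (plug E t) k s = plug (subst_ctx E k s) (subst t k s)"
  by (induction E) auto

lemma lift_ctx_lift_ctx: "i \<le> j \<Longrightarrow> lift_ctx (Suc j) (lift_ctx i E) = lift_ctx i (lift_ctx j E)"
  by (induction E) (auto simp: lift_lift)

lemma subst_ctx_lift: "subst_ctx (lift_ctx 0 E) (Suc k) (lift 0 s) = lift_ctx 0 (subst_ctx E k s)"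
  by (induction E) (auto simp: lift_subst)

lemma subst_ctx_lift0: "subst_ctx (lift_ctx k E) k s = E"
  by (induction E) (auto simp: subst_lift)

lemma lift_fresh: "lift (Suc k) (plug_fresh F) = plug_fresh (lift_ctx k F)"
  by (simp add: plug_fresh_def lift_ctx_lift_ctx)

lemma subst_fresh: "subst (plug_fresh F) (Suc k) (lift 0 s) = plug_fresh (subst_ctx F k s)"
  by (simp add: plug_fresh_def subst_ctx_lift)

lemma subst_fresh0: "subst (plug_fresh F) 0 s = plug F s"
  by (simp add: plug_fresh_def subst_ctx_lift0)

lemma pf_Hole[simp]: "plug_fresh Hole = Var 0"
  and pf_CArg[simp]: "plug_fresh (CArg v E) = App (lift 0 v) (plug_fresh E)"
  and pf_CFun[simp]: "plug_fresh (CFun E u) = App (plug_fresh E) (lift 0 u)"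
  and pf_CReset[simp]: "plug_fresh (CReset E) = Reset (plug_fresh E)"
  and pf_comp: "plug_fresh (ctx_comp G E) = plug (lift_ctx 0 G) (plug_fresh E)"
  by (simp_all add: plug_fresh_def) (induction G, auto)

lemma lift_val[simp]: "is_val (lift k v) = is_val v"
  by (cases v) auto

lemma subst_val: "is_val v \<Longrightarrow> is_val s \<Longrightarrow> is_val (subst v k s)"
  by (cases v) auto

lemma pure_ectx: "is_pure F \<Longrightarrow> is_ectx F"
  by (induction F) auto

lemma pure_comp[simp]: "is_pure (ctx_comp A B) = (is_pure A \<and> is_pure B)"
  by (induction A) auto

lemma ectx_comp[simp]: "is_ectx (ctx_comp A B) = (is_ectx A \<and> is_ectx B)"
  by (induction A) auto

lemma pure_lift[simp]: "is_pure (lift_ctx k F) = is_pure F"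
  by (induction F) auto

lemma ectx_lift[simp]: "is_ectx (lift_ctx k F) = is_ectx F"
  by (induction F) auto

lemma pure_subst: "is_pure F \<Longrightarrow> is_val s \<Longrightarrow> is_pure (subst_ctx F k s)"
  by (induction F) (auto simp: subst_val)

lemma plug_val: "is_val (plug E t) \<Longrightarrow> E = Hole \<and> is_val t"
  by (cases E) auto

inductive st :: "trm \<Rightarrow> trm \<Rightarrow> bool" where
  stApp1: "st a a' \<Longrightarrow> st (App a b) (App a' b)"
| stApp2: "is_val v \<Longrightarrow> st b b' \<Longrightarrow> st (App v b) (App v b')"
| stBeta: "is_val v \<Longrightarrow> st (App (Lam t) v) (subst t 0 v)"
| stReset: "st a a' \<Longrightarrow> st (Reset a) (Reset a')"
| stVal: "is_val v \<Longrightarrow> st (Reset v) v"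
| stShift: "is_pure F \<Longrightarrow> st (Reset (plug F (Shift t))) (Reset (subst t 0 (Lam (Reset (plug_fresh F)))))"

lemma st_plug: "is_ectx E \<Longrightarrow> st a b \<Longrightarrow> st (plug E a) (plug E b)"
  by (induction E) (auto intro: st.intros)

lemma step_st: "step a b \<Longrightarrow> st a b"
  by (induction rule: step.induct) (auto intro: st_plug st.intros)

lemma step_plug: assumes "is_ectx E" "step a b" shows "step (plug E a) (plug E b)"
  using assms(2)
proof (cases rule: step.cases)
  case (beta E0 v t)
  then show ?thesis using assms(1) step.beta[of "ctx_comp E E0" v t] by simp
next
  case (shift E0 F t)
  then show ?thesis using assms(1) step.shift[of "ctx_comp E E0" F t] by simp
next
  case (reset E0 v)
  then show ?thesis using assms(1) step.reset[of "ctx_comp E E0" v] by simp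
qed

lemma st_step: "st a b \<Longrightarrow> step a b"
proof (induction rule: st.induct)
  case (stApp1 a a' b)
  then show ?case using step_plug[of "CFun Hole b"] by simp
next
  case (stApp2 v b b')
  then show ?case using step_plug[of "CArg v Hole"] by simp
next
  case (stBeta v t)
  then show ?case using step.beta[of Hole v t] by simp
next
  case (stReset a a')
  then show ?case using step_plug[of "CReset Hole"] by simp
next
  case (stVal v)
  then show ?case using step.reset[of Hole v] by simp
next
  case (stShift F t)
  then show ?case using step.shift[of Hole F t] by simp
qed

lemma step_eq: "step = st"
  by (intro ext) (auto intro: st_step step_st)

inductive_cases stVarE[elim!]: "st (Var i) c"
inductive_cases stLamE[elim!]: "st (Lam t) c"
inductive_cases stShiftE[elim!]: "st (Shift t) c"
inductive_cases stAppE: "st (App a b) c"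
inductive_cases stResetE: "st (Reset a) c"

lemma no_st_val: "is_val v \<Longrightarrow> \<not> st v c"
  by (cases v) auto

lemma sts_plug: "st\<^sup>*\<^sup>* a b \<Longrightarrow> is_ectx E \<Longrightarrow> st\<^sup>*\<^sup>* (plug E a) (plug E b)"
  by (induction rule: rtranclp_induct) (auto intro: rtranclp.rtrancl_into_rtrancl st_plug)

lemma sts_App1: "st\<^sup>*\<^sup>* a b \<Longrightarrow> st\<^sup>*\<^sup>* (App a c) (App b c)"
  using sts_plug[of a b "CFun Hole c"] by simp
lemma sts_App2: "st\<^sup>*\<^sup>* a b \<Longrightarrow> is_val v \<Longrightarrow> st\<^sup>*\<^sup>* (App v a) (App v b)"
  using sts_plug[of a b "CArg v Hole"] by simp
lemma sts_Reset: "st\<^sup>*\<^sup>* a b \<Longrightarrow> st\<^sup>*\<^sup>* (Reset a) (Reset b)"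
  using sts_plug[of a b "CReset Hole"] by simp

definition ctrl :: "trm \<Rightarrow> bool" where
  "ctrl t \<longleftrightarrow> (\<exists>F u. is_pure F \<and> t = plug F (Shift u))"
definition opn :: "trm \<Rightarrow> bool" where
  "opn t \<longleftrightarrow> (\<exists>E x v. is_ectx E \<and> is_val v \<and> t = plug E (App (Var x) v))"

lemma irred_cases: "\<not>(\<exists>u. st t u) \<Longrightarrow> is_val t \<or> ctrl t \<or> opn t"
proof (induction t)
  case (App a b)
  have na: "\<not>(\<exists>u. st a u)" using App.prems by (auto intro: st.intros)
  show ?case
  proof (cases "is_val a")
    case False
    with App.IH(1)[OF na] show ?thesis
    proof (elim disjE)
      assume "ctrl a" then obtain F u where "is_pure F" "a = plug F (Shift u)" by (auto simp: ctrl_def)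
      then show ?thesis unfolding ctrl_def by (intro disjI2 disjI1 exI[of _ "CFun F b"]) auto
    next
      assume "opn a" then obtain E x v where "is_ectx E" "is_val v" "a = plug E (App (Var x) v)" by (auto simp: opn_def)
      then show ?thesis unfolding opn_def by (intro disjI2 disjI2 exI[of _ "CFun E b"]) auto
    qed simp
  next
    case True
    have nb: "\<not>(\<exists>u. st b u)" using App.prems True by (auto intro: st.intros)
    from App.IH(2)[OF nb] show ?thesis
    proof (elim disjE)
      assume "is_val b"
      then have "\<forall>t. a \<noteq> Lam t" using App.prems by (auto intro: st.intros)
      with True obtain x where "a = Var x" by (cases a) auto
      then show ?thesis using \<open>is_val b\<close> unfolding opn_def by (intro disjI2 disjI2 exI[of _ Hole]) auto
    next
      assume "ctrl b" then obtain F u where "is_pure F" "b = plug F (Shift u)" by (auto simp: ctrl_def)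
      then show ?thesis using True unfolding ctrl_def by (intro disjI2 disjI1 exI[of _ "CArg a F"]) auto
    next
      assume "opn b" then obtain E x v where "is_ectx E" "is_val v" "b = plug E (App (Var x) v)" by (auto simp: opn_def)
      then show ?thesis using True unfolding opn_def by (intro disjI2 disjI2 exI[of _ "CArg a E"]) auto
    qed
  qed
next
  case (Reset a)
  have na: "\<not>(\<exists>u. st a u)" using Reset.prems by (auto intro: st.intros)
  have "\<not> is_val a" using Reset.prems by (auto intro: st.intros)
  moreover have "\<not> ctrl a" using Reset.prems by (auto simp: ctrl_def intro: st.intros)
  ultimately have "opn a" using Reset.IH[OF na] by auto
  then obtain E x v where "is_ectx E" "is_val v" "a = plug E (App (Var x) v)" by (auto simp: opn_def)
  then show ?case unfolding opn_def by (intro disjI2 disjI2 exI[of _ "CReset E"]) auto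
next
  case (Shift u)
  then show ?case unfolding ctrl_def by (intro disjI2 disjI1 exI[of _ Hole]) auto
qed auto

lemma ctrl_not_val: "is_pure F \<Longrightarrow> \<not> is_val (plug F (Shift u))"
  by (cases F) auto

lemma ctrl_irred: "is_pure F \<Longrightarrow> \<not> st (plug F (Shift u)) c"
proof (induction F arbitrary: c)
  case (CArg v F)
  then show ?case by (auto elim!: stAppE simp: no_st_val dest: plug_val)
next
  case (CFun F w)
  then show ?case by (auto elim!: stAppE dest: plug_val)
     (metis ctrl_not_val is_val.simps(2))
qed auto

lemma open_not_ctrl: "is_ectx E \<Longrightarrow> is_val v \<Longrightarrow> is_pure F \<Longrightarrow> plug E (App (Var x) v) = plug F (Shift t) \<Longrightarrow> False"
proof (induction E arbitrary: F)
  case Hole then show ?case by (cases F) (auto dest: ctrl_not_val, metis ctrl_not_val is_val.simps(1))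
next
  case (CArg w E) then show ?case by (cases F) (auto dest: plug_val)
next
  case (CFun E u) then show ?case by (cases F) (auto dest: plug_val)
next
  case (CReset E) then show ?case by (cases F) auto
qed

lemma open_irred: "is_ectx E \<Longrightarrow> is_val v \<Longrightarrow> \<not> st (plug E (App (Var x) v)) c"
proof (induction E arbitrary: c)
  case Hole then show ?case by (auto elim!: stAppE simp: no_st_val)
next
  case (CArg w E) then show ?case by (auto elim!: stAppE simp: no_st_val dest: plug_val)
next
  case (CFun E u) then show ?case apply (auto elim!: stAppE dest: plug_val)
    by (metis is_val.simps(2) is_val.simps(3) plug_val)
next
  case (CReset E) then show ?case by (auto elim!: stResetE dest: plug_val open_not_ctrl)
qed

lemma irred_iff: "(\<not>(\<exists>u. st t u)) = (is_val t \<or> ctrl t \<or> opn t)"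
  using irred_cases no_st_val ctrl_irred open_irred unfolding ctrl_def opn_def by blast



inductive sim :: "trm \<Rightarrow> trm \<Rightarrow> bool" and simc :: "ctx \<Rightarrow> ctx \<Rightarrow> bool" where
  sVar: "sim (Var i) (Var i)"
| sLam: "sim a b \<Longrightarrow> sim (Lam a) (Lam b)"
| sApp: "sim a1 b1 \<Longrightarrow> sim a2 b2 \<Longrightarrow> sim (App a1 a2) (App b1 b2)"
| sShift: "sim a b \<Longrightarrow> sim (Shift a) (Shift b)"
| sReset: "sim a b \<Longrightarrow> sim (Reset a) (Reset b)"
| sA: "simc F G \<Longrightarrow> sim a b \<Longrightarrow> sim (Reset (App (Lam (Reset (plug_fresh F))) a)) (Reset (plug G b))"
| sB: "sim a b \<Longrightarrow> sim (Reset (Reset a)) (Reset b)"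
| sC: "is_val a \<Longrightarrow> sim a b \<Longrightarrow> sim (Reset a) b"
| cHole: "simc Hole Hole"
| cArg: "is_val v \<Longrightarrow> is_val w \<Longrightarrow> sim v w \<Longrightarrow> simc F G \<Longrightarrow> simc (CArg v F) (CArg w G)"
| cFun: "simc F G \<Longrightarrow> sim u u' \<Longrightarrow> simc (CFun F u) (CFun G u')"

inductive sime :: "ctx \<Rightarrow> ctx \<Rightarrow> bool" where
  eHole: "sime Hole Hole"
| eArg: "is_val v \<Longrightarrow> is_val w \<Longrightarrow> sim v w \<Longrightarrow> sime E E' \<Longrightarrow> sime (CArg v E) (CArg w E')"
| eFun: "sime E E' \<Longrightarrow> sim u u' \<Longrightarrow> sime (CFun E u) (CFun E' u')"
| eReset: "sime E E' \<Longrightarrow> sime (CReset E) (CReset E')"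
| eA: "simc F G \<Longrightarrow> sime E E' \<Longrightarrow> sime (CReset (CArg (Lam (Reset (plug_fresh F))) E)) (CReset (ctx_comp G E'))"
| eB: "sime E E' \<Longrightarrow> sime (CReset (CReset E)) (CReset E')"

inductive_cases simcHoleE[elim!]: "simc Hole G"
inductive_cases simcArgE[elim!]: "simc (CArg v F) G"
inductive_cases simcFunE[elim!]: "simc (CFun F u) G"
inductive_cases simcResetE[elim!]: "simc (CReset F) G"
inductive_cases simVarE[elim!]: "sim (Var i) b"
inductive_cases simLamE[elim!]: "sim (Lam a) b"
inductive_cases simShiftE[elim!]: "sim (Shift a) b"
inductive_cases simAppE[elim!]: "sim (App a1 a2) b"
inductive_cases simResetE: "sim (Reset a) b"
inductive_cases simRVarE: "sim a (Var i)"
inductive_cases simRLamE: "sim a (Lam b)"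
inductive_cases simRShiftE: "sim a (Shift b)"
inductive_cases simRAppE: "sim a (App b1 b2)"
inductive_cases simRResetE: "sim a (Reset b)"

lemma sim_val: "sim a b \<Longrightarrow> is_val a \<Longrightarrow> is_val b"
  by (cases a) auto

lemma simc_pure: "simc F G \<Longrightarrow> is_pure F \<and> is_pure G"
  by (induction F arbitrary: G) auto

lemma sime_ectx: "sime E E' \<Longrightarrow> is_ectx E \<and> is_ectx E'"
  by (induction rule: sime.induct) (auto dest: simc_pure pure_ectx)

lemma sim_refl: "sim t t"
  by (induction t) (auto intro: sim_simc.intros)

lemma simc_refl: "is_pure F \<Longrightarrow> simc F F"
  by (induction F) (auto intro: sim_simc.intros sim_refl)

lemma sim_plug: "simc F G \<Longrightarrow> sim a b \<Longrightarrow> sim (plug F a) (plug G b)"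
  by (induction F arbitrary: G) (auto intro!: sApp)

lemma sime_plug: "sime E E' \<Longrightarrow> sim a b \<Longrightarrow> sim (plug E a) (plug E' b)"
  by (induction rule: sime.induct) (auto intro: sim_simc.intros)

lemma sim_lift: "sim a b \<Longrightarrow> sim (lift k a) (lift k b)"
  and simc_lift: "simc F G \<Longrightarrow> simc (lift_ctx k F) (lift_ctx k G)"
proof (induction arbitrary: k and k rule: sim_simc.inducts)
  case (sA F G a b)
  then show ?case using sim_simc.sA[of "lift_ctx k F" "lift_ctx k G" "lift k a" "lift k b"]
    by (simp add: lift_fresh)
qed (auto intro: sim_simc.intros)

lemma sim_subst: "sim a b \<Longrightarrow> sim v w \<Longrightarrow> is_val v \<Longrightarrow> is_val w \<Longrightarrow> sim (subst a k v) (subst b k w)"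
  and simc_subst: "simc F G \<Longrightarrow> sim v w \<Longrightarrow> is_val v \<Longrightarrow> is_val w \<Longrightarrow> simc (subst_ctx F k v) (subst_ctx G k w)"
proof (induction arbitrary: k v w and k v w rule: sim_simc.inducts)
  case (sA F G a b)
  then show ?case using sim_simc.sA[of "subst_ctx F k v" "subst_ctx G k w" "subst a k v" "subst b k w"]
    by (simp add: subst_fresh)
next
  case (sLam a b)
  have "sim (subst a (Suc k) (lift 0 v)) (subst b (Suc k) (lift 0 w))"
    using sLam.IH sLam.prems sim_lift by simp
  then show ?case by (simp add: sim_simc.sLam)
next
  case (sShift a b)
  have "sim (subst a (Suc k) (lift 0 v)) (subst b (Suc k) (lift 0 w))"
    using sShift.IH sShift.prems sim_lift by simp
  then show ?case by (simp add: sim_simc.sShift)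
qed (auto intro: sim_simc.intros sim_refl subst_val)

lemma simc_fresh: "simc F G \<Longrightarrow> sim (plug_fresh F) (plug_fresh G)"
  unfolding plug_fresh_def by (auto intro: sim_plug simc_lift sVar)

lemma lift_lamfresh: "lift 0 (Lam (Reset (plug_fresh F))) = Lam (Reset (plug_fresh (lift_ctx 0 F)))"
  by (simp add: lift_fresh)

lemma key: "simc F G \<Longrightarrow> sim p q \<Longrightarrow>
   sim (Reset (App (lift 0 (Lam (Reset (plug_fresh F)))) p)) (Reset (plug (lift_ctx 0 G) q))"
  unfolding lift_lamfresh by (auto intro: sA simc_lift)

lemma key2: "simc F G \<Longrightarrow> simc F3 G3 \<Longrightarrow>
   sim (Lam (Reset (plug_fresh (CArg (Lam (Reset (plug_fresh F))) F3)))) (Lam (Reset (plug_fresh (ctx_comp G G3))))"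
  by (auto simp: pf_comp lift_fresh intro!: sLam sA simc_lift simc_fresh)

lemma app_fresh_sim: "sim v w \<Longrightarrow> is_val v \<Longrightarrow> sim (app_fresh v) (app_fresh w)"
  by (cases v) (auto intro: sim_refl)

lemma val_rev: "sim a b \<Longrightarrow> is_val b \<Longrightarrow> \<exists>a'. st\<^sup>*\<^sup>* a a' \<and> is_val a' \<and> sim a' b"
proof (cases b)
  case (Var i)
  assume "sim a b"
  then show ?thesis unfolding Var
    by (cases rule: simRVarE) (auto intro: sVar st.intros)
next
  case (Lam t)
  assume "sim a b"
  then show ?thesis unfolding Lam
    by (cases rule: simRLamE) (auto intro: sim_simc.intros st.intros)
qed auto

lemma sim_lam_rev: "sim a (Lam t') \<Longrightarrow> is_val a \<Longrightarrow> \<exists>t. a = Lam t \<and> sim t t'"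
  by (cases a) auto



definition atomic :: "trm \<Rightarrow> bool" where
  "atomic r \<longleftrightarrow> (\<exists>y v. r = App (Var y) v \<and> is_val v) \<or> (\<exists>u. r = Shift u)"

lemma atomic_nv: "atomic r \<Longrightarrow> \<not> is_val r"
  by (auto simp: atomic_def)

lemma decomp: "is_pure G \<Longrightarrow> \<not> is_val x \<Longrightarrow> is_ectx E \<Longrightarrow> atomic r \<Longrightarrow> plug G x = plug E r
   \<Longrightarrow> \<exists>E3. E = ctx_comp G E3 \<and> x = plug E3 r \<and> is_ectx E3"
proof (induction G arbitrary: E)
  case Hole then show ?case by auto
next
  case (CArg w G)
  show ?case
  proof (cases E)
    case Hole
    then show ?thesis using CArg.prems by (auto simp: atomic_def dest: plug_val)
  next
    case (CArg w' E0)
    then show ?thesis using CArg.prems CArg.IH[of E0] by auto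
  next
    case (CFun E0 u)
    then show ?thesis using CArg.prems atomic_nv by (auto dest: plug_val)
  next
    case (CReset E0)
    then show ?thesis using CArg.prems by auto
  qed
next
  case (CFun G u)
  show ?case
  proof (cases E)
    case Hole
    then show ?thesis using CFun.prems by (auto simp: atomic_def dest: plug_val)
      (metis is_val.simps(1) plug_val)
  next
    case (CArg w' E0)
    then show ?thesis using CFun.prems by (auto dest: plug_val)
  next
    case (CFun E0 u')
    then show ?thesis using CFun.prems CFun.IH[of E0] by auto
  next
    case (CReset E0)
    then show ?thesis using CFun.prems by auto
  qed
qed auto

lemma st_plug_nonval: "is_pure G \<Longrightarrow> \<not> is_val x \<Longrightarrow> st (plug G x) c \<Longrightarrow> \<exists>x'. st x x' \<and> c = plug G x'"
proof (induction G arbitrary: c)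
  case (CArg w G)
  then show ?case by (auto elim!: stAppE simp: no_st_val dest: plug_val)
next
  case (CFun G u)
  then show ?case apply (auto elim!: stAppE dest: plug_val)
    by (metis is_val.simps(2) plug_val)
qed auto

lemma D1: "is_pure F \<Longrightarrow> sim (plug F (Shift u)) b \<Longrightarrow> \<exists>G u'. b = plug G (Shift u') \<and> simc F G \<and> sim u u'"
proof (induction F arbitrary: b)
  case Hole then show ?case by (auto intro!: cHole exI[of _ Hole])
next
  case (CArg v F)
  from CArg.prems obtain b1 b2 where b: "b = App b1 b2" "sim v b1" "sim (plug F (Shift u)) b2" "is_val v" "is_pure F"
    by auto
  with CArg.IH obtain G u' where "b2 = plug G (Shift u')" "simc F G" "sim u u'" by blast
  then show ?case using b sim_val by (intro exI[of _ "CArg b1 G"]) (auto intro: cArg)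
next
  case (CFun F w)
  from CFun.prems obtain b1 b2 where b: "b = App b1 b2" "sim w b2" "sim (plug F (Shift u)) b1" "is_pure F"
    by auto
  with CFun.IH obtain G u' where "b1 = plug G (Shift u')" "simc F G" "sim u u'" by blast
  then show ?case using b by (intro exI[of _ "CFun G b2"]) (auto intro: cFun)
qed auto

lemma D2: "is_pure G \<Longrightarrow> sim a (plug G (Shift u')) \<Longrightarrow> \<exists>F u. st\<^sup>*\<^sup>* a (plug F (Shift u)) \<and> simc F G \<and> sim u u'"
proof (induction G arbitrary: a)
  case Hole
  from Hole.prems(2) show ?case
    by (cases rule: simRShiftE) (auto intro!: cHole exI[of _ Hole] dest: sim_val)
next
  case (CArg w G)
  from CArg.prems(2) have "\<exists>a1 a2. a = App a1 a2 \<and> sim a1 w \<and> sim a2 (plug G (Shift u'))"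
    by (cases rule: simRAppE) (auto dest: sim_val)
  then obtain a1 a2 where a: "a = App a1 a2" "sim a1 w" "sim a2 (plug G (Shift u'))" by blast
  have wv: "is_val w" "is_pure G" using CArg.prems by auto
  obtain a1' where a1: "st\<^sup>*\<^sup>* a1 a1'" "is_val a1'" "sim a1' w" using val_rev[OF a(2) wv(1)] by blast
  obtain F u where F: "st\<^sup>*\<^sup>* a2 (plug F (Shift u))" "simc F G" "sim u u'" using CArg.IH[OF wv(2) a(3)] by blast
  have "st\<^sup>*\<^sup>* a (App a1' (plug F (Shift u)))"
    unfolding a by (rule rtranclp_trans[OF sts_App1[OF a1(1)] sts_App2[OF F(1) a1(2)]])
  then show ?case using a1 F wv
    by (intro exI[of _ "CArg a1' F"] exI[of _ u]) (auto intro: cArg)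
next
  case (CFun G w)
  from CFun.prems(2) have "\<exists>a1 a2. a = App a1 a2 \<and> sim a2 w \<and> sim a1 (plug G (Shift u'))"
    by (cases rule: simRAppE) (auto dest: sim_val)
  then obtain a1 a2 where a: "a = App a1 a2" "sim a2 w" "sim a1 (plug G (Shift u'))" by blast
  have wv: "is_pure G" using CFun.prems by auto
  obtain F u where F: "st\<^sup>*\<^sup>* a1 (plug F (Shift u))" "simc F G" "sim u u'" using CFun.IH[OF wv a(3)] by blast
  have "st\<^sup>*\<^sup>* a (App (plug F (Shift u)) a2)"
    unfolding a by (rule sts_App1[OF F(1)])
  then show ?case using F a
    by (intro exI[of _ "CFun F a2"] exI[of _ u]) (auto intro: cFun)
next
  case (CReset G) then show ?case by simp
qed



lemma simReset_inv: "sim (Reset a) b \<Longrightarrow> (\<exists>b0. b = Reset b0 \<and> sim a b0)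
  \<or> (\<exists>F G a1 b1. a = App (Lam (Reset (plug_fresh F))) a1 \<and> b = Reset (plug G b1) \<and> simc F G \<and> sim a1 b1)
  \<or> (\<exists>a0 b0. a = Reset a0 \<and> b = Reset b0 \<and> sim a0 b0) \<or> (is_val a \<and> sim a b)"
  by (erule simResetE) auto

lemma simRReset_inv: "sim a (Reset b) \<Longrightarrow> (\<exists>a0. a = Reset a0 \<and> sim a0 b)
  \<or> (\<exists>F G a1 b1. a = Reset (App (Lam (Reset (plug_fresh F))) a1) \<and> b = plug G b1 \<and> simc F G \<and> sim a1 b1)
  \<or> (\<exists>a0. a = Reset (Reset a0) \<and> sim a0 b)"
  by (erule simRResetE) (auto dest: sim_val)

lemma simRApp_inv: "sim a (App b1 b2) \<Longrightarrow> \<exists>a1 a2. a = App a1 a2 \<and> sim a1 b1 \<and> sim a2 b2"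
  by (erule simRAppE) (auto dest: sim_val)

lemma size_plug: "size t \<le> size (plug E t)"
  by (induction E) auto

lemma D3: "sim a b \<Longrightarrow> is_ectx E \<Longrightarrow> is_val v \<Longrightarrow> a = plug E (App (Var x) v) \<Longrightarrow>
  \<exists>E' v'. b = plug E' (App (Var x) v') \<and> sime E E' \<and> sim v v' \<and> is_val v'"
proof (induction E arbitrary: a b rule: measure_induct_rule[of size])
  case (less E)
  show ?case
  proof (cases E)
    case Hole
    then show ?thesis using less.prems sim_val by (auto intro!: exI[of _ Hole] eHole)
  next
    case (CArg w E0)
    with less.prems obtain b1 b2 where b: "b = App b1 b2" "sim w b1" "sim (plug E0 (App (Var x) v)) b2" "is_val w" "is_ectx E0"
      by auto
    with less.IH[of E0] CArg less.prems obtain E' v' where "b2 = plug E' (App (Var x) v')" "sime E0 E'" "sim v v'" "is_val v'"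
      by fastforce
    then show ?thesis using b sim_val CArg by (intro exI[of _ "CArg b1 E'"]) (auto intro: eArg)
  next
    case (CFun E0 u)
    with less.prems obtain b1 b2 where b: "b = App b1 b2" "sim u b2" "sim (plug E0 (App (Var x) v)) b1" "is_ectx E0"
      by auto
    with less.IH[of E0] CFun less.prems obtain E' v' where "b1 = plug E' (App (Var x) v')" "sime E0 E'" "sim v v'" "is_val v'"
      by fastforce
    then show ?thesis using b CFun by (intro exI[of _ "CFun E' b2"]) (auto intro: eFun)
  next
    case (CReset E0)
    have e0: "is_ectx E0" using less.prems CReset by auto
    have "sim (Reset (plug E0 (App (Var x) v))) b" using less.prems CReset by simp
    from simReset_inv[OF this] show ?thesis
    proof (elim disjE exE conjE)
      fix b0 assume "b = Reset b0" "sim (plug E0 (App (Var x) v)) b0"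
      with less.IH[of E0] CReset less.prems e0 obtain E' v' where "b0 = plug E' (App (Var x) v')" "sime E0 E'" "sim v v'" "is_val v'"
        by fastforce
      then show ?thesis using \<open>b = Reset b0\<close> CReset by (intro exI[of _ "CReset E'"]) (auto intro: eReset)
    next
      fix F G a1 b1 assume h: "plug E0 (App (Var x) v) = App (Lam (Reset (plug_fresh F))) a1"
        "b = Reset (plug G b1)" "simc F G" "sim a1 b1"
      from h(1) e0 obtain E1 where E1: "E0 = CArg (Lam (Reset (plug_fresh F))) E1" "a1 = plug E1 (App (Var x) v)" "is_ectx E1"
        by (cases E0) (auto dest: plug_val, metis is_val.simps(2,3) plug_val)
      with less.IH[of E1] CReset less.prems h obtain E' v' where "b1 = plug E' (App (Var x) v')" "sime E1 E'" "sim v v'" "is_val v'"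
        by fastforce
      then show ?thesis using h E1 CReset by (intro exI[of _ "CReset (ctx_comp G E')"]) (auto intro: eA)
    next
      fix a0 b0 assume h: "plug E0 (App (Var x) v) = Reset a0" "b = Reset b0" "sim a0 b0"
      from h(1) e0 obtain E1 where E1: "E0 = CReset E1" "a0 = plug E1 (App (Var x) v)" "is_ectx E1"
        by (cases E0) auto
      with less.IH[of E1] CReset less.prems h obtain E' v' where "b0 = plug E' (App (Var x) v')" "sime E1 E'" "sim v v'" "is_val v'"
        by fastforce
      then show ?thesis using h E1 CReset by (intro exI[of _ "CReset E'"]) (auto intro: eB)
    next
      assume "is_val (plug E0 (App (Var x) v))"
      then show ?thesis by (auto dest: plug_val)
    qed
  qed
qed

lemma opnI: "is_ectx E \<Longrightarrow> is_val v \<Longrightarrow> opn (plug E (App (Var x) v))"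
  unfolding opn_def by blast

lemma opn_ctx: "opn t \<Longrightarrow> is_ectx C \<Longrightarrow> opn (plug C t)"
proof -
  assume "opn t" "is_ectx C"
  then obtain E x v where "is_ectx E" "is_val v" "t = plug E (App (Var x) v)" by (auto simp: opn_def)
  then show ?thesis using \<open>is_ectx C\<close> unfolding opn_def
    by (intro exI[of _ "ctx_comp C E"] exI[of _ x] exI[of _ v]) auto
qed

lemma beta_fresh: "is_val v \<Longrightarrow> st (Reset (App (Lam (Reset (plug_fresh F))) v)) (Reset (Reset (plug F v)))"
  using stReset[OF stBeta[of v "Reset (plug_fresh F)"]] by (simp add: subst_fresh0)

lemma D4: "sim a b \<Longrightarrow> opn b \<Longrightarrow> \<exists>a'. st\<^sup>*\<^sup>* a a' \<and> opn a' \<and> sim a' b"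
proof (induction b arbitrary: a rule: measure_induct_rule[of size])
  case (less b)
  from less.prems(2) obtain E' x v' where b: "is_ectx E'" "is_val v'" "b = plug E' (App (Var x) v')"
    by (auto simp: opn_def)
  show ?case
  proof (cases E')
    case Hole
    then obtain a1 a2 where a: "a = App a1 a2" "sim a1 (Var x)" "sim a2 v'"
      using simRApp_inv less.prems b by fastforce
    obtain a1' where a1: "st\<^sup>*\<^sup>* a1 a1'" "is_val a1'" "sim a1' (Var x)" using val_rev[OF a(2)] by auto
    then have "a1' = Var x" by (cases a1') auto
    obtain a2' where a2: "st\<^sup>*\<^sup>* a2 a2'" "is_val a2'" "sim a2' v'" using val_rev[OF a(3) b(2)] by auto
    have "st\<^sup>*\<^sup>* a (App (Var x) a2')"
      unfolding a using rtranclp_trans[OF sts_App1[OF a1(1)] sts_App2[OF a2(1) a1(2)]] \<open>a1' = Var x\<close> by simp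
    moreover have "opn (App (Var x) a2')" using opnI[of Hole a2' x] a2 by simp
    ultimately show ?thesis using a2 b Hole by (auto intro!: sApp sVar)
  next
    case (CArg w E0)
    then obtain a1 a2 where a: "a = App a1 a2" "sim a1 w" "sim a2 (plug E0 (App (Var x) v'))"
      using simRApp_inv less.prems b by fastforce
    have wv: "is_val w" "is_ectx E0" using b CArg by auto
    obtain a1' where a1: "st\<^sup>*\<^sup>* a1 a1'" "is_val a1'" "sim a1' w" using val_rev[OF a(2) wv(1)] by auto
    have "size (plug E0 (App (Var x) v')) < size b" using b CArg by simp
    from less.IH[OF this a(3)] wv b obtain a2' where a2: "st\<^sup>*\<^sup>* a2 a2'" "opn a2'" "sim a2' (plug E0 (App (Var x) v'))"
      using opnI by blast
    have "st\<^sup>*\<^sup>* a (App a1' a2')"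
      unfolding a by (rule rtranclp_trans[OF sts_App1[OF a1(1)] sts_App2[OF a2(1) a1(2)]])
    moreover have "opn (App a1' a2')" using opn_ctx[OF a2(2), of "CArg a1' Hole"] a1(2) by simp
    ultimately show ?thesis using a1 a2 b CArg by (auto intro!: sApp)
  next
    case (CFun E0 u)
    then obtain a1 a2 where a: "a = App a1 a2" "sim a2 u" "sim a1 (plug E0 (App (Var x) v'))"
      using simRApp_inv less.prems b by fastforce
    have wv: "is_ectx E0" using b CFun by auto
    have "size (plug E0 (App (Var x) v')) < size b" using b CFun by simp
    from less.IH[OF this a(3)] wv b obtain a1' where a1: "st\<^sup>*\<^sup>* a1 a1'" "opn a1'" "sim a1' (plug E0 (App (Var x) v'))"
      using opnI by blast
    have "st\<^sup>*\<^sup>* a (App a1' a2)"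
      unfolding a by (rule sts_App1[OF a1(1)])
    moreover have "opn (App a1' a2)" using opn_ctx[OF a1(2), of "CFun Hole a2"] by simp
    ultimately show ?thesis using a1 a b CFun by (auto intro!: sApp)
  next
    case (CReset E0)
    define b0 where "b0 = plug E0 (App (Var x) v')"
    have e0: "is_ectx E0" using b CReset by auto
    have ob0: "opn b0" using e0 b opnI b0_def by blast
    have bb: "b = Reset b0" using b CReset b0_def by simp
    have sz: "size b0 < size b" using bb by simp
    from simRReset_inv less.prems bb have "(\<exists>a0. a = Reset a0 \<and> sim a0 b0)
      \<or> (\<exists>F G a1 b1. a = Reset (App (Lam (Reset (plug_fresh F))) a1) \<and> b0 = plug G b1 \<and> simc F G \<and> sim a1 b1)
      \<or> (\<exists>a0. a = Reset (Reset a0) \<and> sim a0 b0)" by blast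
    then show ?thesis
    proof (elim disjE exE conjE)
      fix a0 assume h: "a = Reset a0" "sim a0 b0"
      from less.IH[OF sz h(2) ob0] obtain a0' where "st\<^sup>*\<^sup>* a0 a0'" "opn a0'" "sim a0' b0" by blast
      then show ?thesis using h bb
        using opn_ctx[of a0' "CReset Hole"]
        by (intro exI[of _ "Reset a0'"]) (auto intro: sts_Reset sReset)
    next
      fix a0 assume h: "a = Reset (Reset a0)" "sim a0 b0"
      from less.IH[OF sz h(2) ob0] obtain a0' where "st\<^sup>*\<^sup>* a0 a0'" "opn a0'" "sim a0' b0" by blast
      then show ?thesis using h bb
        using opn_ctx[of a0' "CReset (CReset Hole)"]
        by (intro exI[of _ "Reset (Reset a0')"]) (auto intro: sts_Reset sB)
    next
      fix F G a1 b1 assume h: "a = Reset (App (Lam (Reset (plug_fresh F))) a1)" "b0 = plug G b1" "simc F G" "sim a1 b1"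
      have pG: "is_pure G" "is_pure F" using simc_pure h(3) by auto
      show ?thesis
      proof (cases "is_val b1")
        case True
        obtain a1' where a1: "st\<^sup>*\<^sup>* a1 a1'" "is_val a1'" "sim a1' b1" using val_rev[OF h(4) True] by auto
        have s1: "st\<^sup>*\<^sup>* a (Reset (Reset (plug F a1')))"
          unfolding h(1)
          using sts_plug[OF a1(1), of "CReset (CArg (Lam (Reset (plug_fresh F))) Hole)"] beta_fresh[OF a1(2), of F]
          by (auto intro: rtranclp.rtrancl_into_rtrancl)
        have "sim (plug F a1') b0" using h sim_plug a1 by simp
        from less.IH[OF sz this ob0] obtain a0' where "st\<^sup>*\<^sup>* (plug F a1') a0'" "opn a0'" "sim a0' b0" by blast
        then show ?thesis using s1 bb opn_ctx[of a0' "CReset (CReset Hole)"]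
          by (intro exI[of _ "Reset (Reset a0')"])
            (auto intro: rtranclp_trans sts_Reset sB)
      next
        case False
        have "atomic (App (Var x) v')" using b by (auto simp: atomic_def)
        from decomp[OF pG(1) False e0 this] h(2) b0_def obtain E3 where
          E3: "E0 = ctx_comp G E3" "b1 = plug E3 (App (Var x) v')" "is_ectx E3" by auto
        have sz1: "size b1 < size b" using bb h(2) size_plug[of b1 G] by simp
        from less.IH[OF sz1 h(4)] E3 b opnI obtain a1' where a1: "st\<^sup>*\<^sup>* a1 a1'" "opn a1'" "sim a1' b1" by blast
        have s1: "st\<^sup>*\<^sup>* a (Reset (App (Lam (Reset (plug_fresh F))) a1'))"
          unfolding h(1) using sts_plug[OF a1(1), of "CReset (CArg (Lam (Reset (plug_fresh F))) Hole)"] by simp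
        from a1(2) obtain E4 y w4 where "is_ectx E4" "is_val w4" "a1' = plug E4 (App (Var y) w4)" by (auto simp: opn_def)
        then have "opn (Reset (App (Lam (Reset (plug_fresh F))) a1'))"
          using opnI[of "CReset (CArg (Lam (Reset (plug_fresh F))) E4)" w4 y] by simp
        then show ?thesis using s1 a1 h bb by (auto intro: sA)
      qed
    qed
  qed
qed



lemma stApp_inv: "st (App a b) c \<Longrightarrow> (\<exists>a'. st a a' \<and> c = App a' b) \<or> (is_val a \<and> (\<exists>b'. st b b' \<and> c = App a b'))
  \<or> (\<exists>t. a = Lam t \<and> is_val b \<and> c = subst t 0 b)"
  by (erule stAppE) auto

lemma stReset_inv: "st (Reset a) c \<Longrightarrow> (\<exists>a'. st a a' \<and> c = Reset a') \<or> (is_val a \<and> c = a)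
  \<or> (\<exists>F u. is_pure F \<and> a = plug F (Shift u) \<and> c = Reset (subst u 0 (Lam (Reset (plug_fresh F)))))"
  by (erule stResetE) auto

lemma lam_sim: "simc F G \<Longrightarrow> sim (Lam (Reset (plug_fresh F))) (Lam (Reset (plug_fresh G)))"
  by (intro sLam sReset simc_fresh)

lemma subst0_sim: "sim l l' \<Longrightarrow> is_val l \<Longrightarrow> is_val l' \<Longrightarrow> sim u u' \<Longrightarrow> sim (subst u 0 l) (subst u' 0 l')"
  using sim_subst by blast

lemma pure_shift_not_reset: "is_pure F \<Longrightarrow> plug F (Shift u) \<noteq> Reset a"
  by (cases F) auto

lemma S1: "sim a b \<Longrightarrow> st a a' \<Longrightarrow> \<exists>b'. st\<^sup>*\<^sup>* b b' \<and> sim a' b'"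
proof (induction a arbitrary: b a' rule: measure_induct_rule[of size])
  case (less a)
  from less.prems(1) show ?case
  proof (cases rule: sim.cases)
    case (sVar i) then show ?thesis using less.prems by auto
  next
    case (sLam x y) then show ?thesis using less.prems by auto
  next
    case (sShift x y) then show ?thesis using less.prems by auto
  next
    case (sApp a1 b1 a2 b2)
    from stApp_inv[OF less.prems(2)[unfolded sApp(1)]] show ?thesis
    proof (elim disjE exE conjE)
      fix a1' assume h: "st a1 a1'" "a' = App a1' a2"
      from less.IH[of a1] sApp h obtain b1' where "st\<^sup>*\<^sup>* b1 b1'" "sim a1' b1'" by fastforce
      then show ?thesis using h sApp by (auto intro: sts_App1 sim_simc.sApp)
    next
      fix a2' assume h: "is_val a1" "st a2 a2'" "a' = App a1 a2'"
      from less.IH[of a2] sApp h obtain b2' where "st\<^sup>*\<^sup>* b2 b2'" "sim a2' b2'" by fastforce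
      then show ?thesis using h sApp sim_val by (auto intro: sts_App2 sim_simc.sApp)
    next
      fix t assume h: "a1 = Lam t" "is_val a2" "a' = subst t 0 a2"
      then obtain t' where t': "b1 = Lam t'" "sim t t'" using sApp by auto
      have "is_val b2" using sApp h sim_val by auto
      then have "st b (subst t' 0 b2)" using sApp t' by (auto intro: stBeta)
      then show ?thesis using h t' sApp \<open>is_val b2\<close> by (auto intro!: exI[of _ "subst t' 0 b2"] sim_subst)
    qed
  next
    case (sReset a0 b0)
    from stReset_inv[OF less.prems(2)[unfolded sReset(1)]] show ?thesis
    proof (elim disjE exE conjE)
      fix a0' assume h: "st a0 a0'" "a' = Reset a0'"
      from less.IH[of a0] sReset h obtain b0' where "st\<^sup>*\<^sup>* b0 b0'" "sim a0' b0'" by fastforce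
      then show ?thesis using h sReset by (auto intro: sts_Reset sim_simc.sReset)
    next
      assume h: "is_val a0" "a' = a0"
      then have "st b b0" using sReset sim_val by (auto intro: stVal)
      then show ?thesis using h sReset by auto
    next
      fix F u assume h: "is_pure F" "a0 = plug F (Shift u)" "a' = Reset (subst u 0 (Lam (Reset (plug_fresh F))))"
      have "sim (plug F (Shift u)) b0" using sReset h by simp
      from D1[OF h(1) this] obtain G u' where G: "b0 = plug G (Shift u')" "simc F G" "sim u u'" by blast
      have "st b (Reset (subst u' 0 (Lam (Reset (plug_fresh G)))))"
        using sReset G simc_pure[OF G(2)] by (auto intro: stShift)
      then show ?thesis using h G by (auto intro!: sim_simc.sReset subst0_sim lam_sim)
    qed
  next
    case (sA F G a1 b1)
    have pG: "is_pure F" "is_pure G" using simc_pure sA by auto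
    from stReset_inv[OF less.prems(2)[unfolded sA(1)]] show ?thesis
    proof (elim disjE exE conjE)
      fix c assume h: "st (App (Lam (Reset (plug_fresh F))) a1) c" "a' = Reset c"
      from stApp_inv[OF h(1)] show ?thesis
      proof (elim disjE exE conjE)
        fix x assume "st (Lam (Reset (plug_fresh F))) x" then show ?thesis by auto
      next
        fix a1' assume h2: "st a1 a1'" "c = App (Lam (Reset (plug_fresh F))) a1'"
        from less.IH[of a1] sA h2 obtain b1' where b1: "st\<^sup>*\<^sup>* b1 b1'" "sim a1' b1'" by fastforce
        have "st\<^sup>*\<^sup>* b (Reset (plug G b1'))" using sts_plug[OF b1(1), of "CReset G"] sA pG pure_ectx by simp
        then show ?thesis using h h2 b1 sA by (auto intro: sim_simc.sA)
      next
        fix t assume h2: "Lam (Reset (plug_fresh F)) = Lam t" "is_val a1" "c = subst t 0 a1"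
        then have "a' = Reset (Reset (plug F a1))" using h by (auto simp: subst_fresh0)
        then show ?thesis using sA sim_plug by (auto intro!: exI[of _ b] sB)
      qed
    next
      assume "is_val (App (Lam (Reset (plug_fresh F))) a1)" then show ?thesis by simp
    next
      fix F' u assume h: "is_pure F'" "App (Lam (Reset (plug_fresh F))) a1 = plug F' (Shift u)"
        "a' = Reset (subst u 0 (Lam (Reset (plug_fresh F'))))"
      from h(1,2) obtain F3 where F3: "F' = CArg (Lam (Reset (plug_fresh F))) F3" "a1 = plug F3 (Shift u)" "is_pure F3"
        by (cases F') (auto, metis ctrl_not_val is_val.simps(2))
      have "sim (plug F3 (Shift u)) b1" using sA F3 by simp
      from D1[OF F3(3) this] obtain G3 u' where G3: "b1 = plug G3 (Shift u')" "simc F3 G3" "sim u u'" by blast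
      have "is_pure (ctx_comp G G3)" using pG simc_pure[OF G3(2)] by simp
      then have "st b (Reset (subst u' 0 (Lam (Reset (plug_fresh (ctx_comp G G3))))))"
        using stShift[of "ctx_comp G G3" u'] sA G3 by simp
      moreover have k: "sim (Lam (Reset (plug_fresh (CArg (Lam (Reset (plug_fresh F))) F3)))) (Lam (Reset (plug_fresh (ctx_comp G G3))))"
        using key2[OF \<open>simc F G\<close> G3(2)] .
      have "sim a' (Reset (subst u' 0 (Lam (Reset (plug_fresh (ctx_comp G G3))))))"
        unfolding h(3) F3(1) by (rule sim_simc.sReset[OF subst0_sim[OF k _ _ G3(3)]]) simp_all
      ultimately show ?thesis by blast
    qed
  next
    case (sB a0 b0)
    from stReset_inv[OF less.prems(2)[unfolded sB(1)]] show ?thesis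
    proof (elim disjE exE conjE)
      fix c assume h: "st (Reset a0) c" "a' = Reset c"
      from stReset_inv[OF h(1)] show ?thesis
      proof (elim disjE exE conjE)
        fix a0' assume h2: "st a0 a0'" "c = Reset a0'"
        from less.IH[of a0] sB h2 obtain b0' where "st\<^sup>*\<^sup>* b0 b0'" "sim a0' b0'" by fastforce
        then show ?thesis using h h2 sB by (auto intro: sts_Reset sim_simc.sB)
      next
        assume h2: "is_val a0" "c = a0"
        then show ?thesis using h sB by (auto intro!: exI[of _ b] sim_simc.sReset)
      next
        fix F u assume h2: "is_pure F" "a0 = plug F (Shift u)" "c = Reset (subst u 0 (Lam (Reset (plug_fresh F))))"
        have "sim (plug F (Shift u)) b0" using sB h2 by simp
        from D1[OF h2(1) this] obtain G u' where G: "b0 = plug G (Shift u')" "simc F G" "sim u u'" by blast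
        have "st b (Reset (subst u' 0 (Lam (Reset (plug_fresh G)))))"
          using sB G simc_pure[OF G(2)] by (auto intro: stShift)
        then show ?thesis using h h2 G by (auto intro!: sim_simc.sB subst0_sim lam_sim)
      qed
    next
      assume "is_val (Reset a0)" then show ?thesis by simp
    next
      fix F u assume "is_pure F" "Reset a0 = plug F (Shift u)"
      then show ?thesis using pure_shift_not_reset by metis
    qed
  next
    case (sC a0)
    from stReset_inv[OF less.prems(2)[unfolded sC(1)]] show ?thesis
    proof (elim disjE exE conjE)
      fix a0' assume "st a0 a0'" then show ?thesis using sC no_st_val by blast
    next
      assume "is_val a0" "a' = a0" then show ?thesis using sC by auto
    next
      fix F u assume "is_pure F" "a0 = plug F (Shift u)"
      then show ?thesis using sC ctrl_not_val by blast
    qed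
  qed
qed



lemma S2: "sim a b \<Longrightarrow> st b b' \<Longrightarrow> \<exists>a'. st\<^sup>*\<^sup>* a a' \<and> sim a' b'"
proof (induction b arbitrary: a b' rule: measure_induct_rule[of size])
  case (less b)
  have Bc: "\<exists>a'. st\<^sup>*\<^sup>* (Reset (Reset a0)) a' \<and> sim a' b'" if h0: "sim a0 b0" "b = Reset b0" for a0 b0
  proof -
    from stReset_inv[OF less.prems(2)[unfolded h0(2)]] show ?thesis
    proof (elim disjE exE conjE)
      fix c assume h: "st b0 c" "b' = Reset c"
      from less.IH[of b0] h0 h obtain a0' where "st\<^sup>*\<^sup>* a0 a0'" "sim a0' c" by fastforce
      then show ?thesis using h by (auto intro: sts_Reset sB)
    next
      assume h: "is_val b0" "b' = b0"
      obtain a0v where av: "st\<^sup>*\<^sup>* a0 a0v" "is_val a0v" "sim a0v b0" using val_rev[OF h0(1) h(1)] by blast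
      have "st\<^sup>*\<^sup>* (Reset (Reset a0)) (Reset (Reset a0v))" using av by (auto intro: sts_Reset)
      also have "st (Reset (Reset a0v)) (Reset a0v)" using av by (auto intro: stReset stVal)
      also have "st (Reset a0v) a0v" using av by (auto intro: stVal)
      finally show ?thesis using av h by blast
    next
      fix G u' assume h: "is_pure G" "b0 = plug G (Shift u')" "b' = Reset (subst u' 0 (Lam (Reset (plug_fresh G))))"
      from D2[OF h(1)] h0 h obtain F u where Fu: "st\<^sup>*\<^sup>* a0 (plug F (Shift u))" "simc F G" "sim u u'" by blast
      have "st\<^sup>*\<^sup>* (Reset (Reset a0)) (Reset (Reset (plug F (Shift u))))" using Fu by (auto intro: sts_Reset)
      also have "st (Reset (Reset (plug F (Shift u)))) (Reset (Reset (subst u 0 (Lam (Reset (plug_fresh F))))))"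
        using simc_pure[OF Fu(2)] by (auto intro: stReset stShift)
      finally show ?thesis using h Fu by (auto intro!: sB subst0_sim lam_sim)
    qed
  qed
  from less.prems(1) show ?case
  proof (cases rule: sim.cases)
    case (sVar i) then show ?thesis using less.prems by auto
  next
    case (sLam x y) then show ?thesis using less.prems by auto
  next
    case (sShift x y) then show ?thesis using less.prems by auto
  next
    case (sC a0)
    then have "is_val b" using sim_val by blast
    then show ?thesis using less.prems no_st_val by blast
  next
    case (sB a0 b0) then show ?thesis using Bc by blast
  next
    case (sApp a1 b1 a2 b2)
    from stApp_inv[OF less.prems(2)[unfolded sApp(2)]] show ?thesis
    proof (elim disjE exE conjE)
      fix b1' assume h: "st b1 b1'" "b' = App b1' b2"
      from less.IH[of b1] sApp h obtain a1' where "st\<^sup>*\<^sup>* a1 a1'" "sim a1' b1'" by fastforce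
      then show ?thesis using h sApp by (auto intro: sts_App1 sim_simc.sApp)
    next
      fix b2' assume h: "is_val b1" "st b2 b2'" "b' = App b1 b2'"
      obtain a1v where a1: "st\<^sup>*\<^sup>* a1 a1v" "is_val a1v" "sim a1v b1" using val_rev sApp h by blast
      from less.IH[of b2] sApp h obtain a2' where a2: "st\<^sup>*\<^sup>* a2 a2'" "sim a2' b2'" by fastforce
      have "st\<^sup>*\<^sup>* a (App a1v a2')"
        unfolding sApp(1) by (rule rtranclp_trans[OF sts_App1[OF a1(1)] sts_App2[OF a2(1) a1(2)]])
      then show ?thesis using a1 a2 h by (auto intro: sim_simc.sApp)
    next
      fix t' assume h: "b1 = Lam t'" "is_val b2" "b' = subst t' 0 b2"
      obtain a1v where a1: "st\<^sup>*\<^sup>* a1 a1v" "is_val a1v" "sim a1v b1" using val_rev sApp h by fastforce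
      then obtain t where t: "a1v = Lam t" "sim t t'" using sim_lam_rev h by blast
      obtain a2v where a2: "st\<^sup>*\<^sup>* a2 a2v" "is_val a2v" "sim a2v b2" using val_rev sApp h by blast
      have "st\<^sup>*\<^sup>* a (App a1v a2v)"
        unfolding sApp(1) by (rule rtranclp_trans[OF sts_App1[OF a1(1)] sts_App2[OF a2(1) a1(2)]])
      also have "st (App a1v a2v) (subst t 0 a2v)" using t a2 by (auto intro: stBeta)
      finally show ?thesis using h t a2 by (auto intro!: sim_subst)
    qed
  next
    case (sReset a0 b0)
    from stReset_inv[OF less.prems(2)[unfolded sReset(2)]] show ?thesis
    proof (elim disjE exE conjE)
      fix c assume h: "st b0 c" "b' = Reset c"
      from less.IH[of b0] sReset h obtain a0' where "st\<^sup>*\<^sup>* a0 a0'" "sim a0' c" by fastforce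
      then show ?thesis using h sReset by (auto intro: sts_Reset sim_simc.sReset)
    next
      assume h: "is_val b0" "b' = b0"
      obtain a0v where av: "st\<^sup>*\<^sup>* a0 a0v" "is_val a0v" "sim a0v b0" using val_rev sReset h by blast
      have "st\<^sup>*\<^sup>* a (Reset a0v)" using av sReset by (auto intro: sts_Reset)
      also have "st (Reset a0v) a0v" using av by (auto intro: stVal)
      finally show ?thesis using av h by blast
    next
      fix G u' assume h: "is_pure G" "b0 = plug G (Shift u')" "b' = Reset (subst u' 0 (Lam (Reset (plug_fresh G))))"
      from D2[OF h(1)] sReset h obtain F u where Fu: "st\<^sup>*\<^sup>* a0 (plug F (Shift u))" "simc F G" "sim u u'" by blast
      have "st\<^sup>*\<^sup>* a (Reset (plug F (Shift u)))" using Fu sReset by (auto intro: sts_Reset)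
      also have "st (Reset (plug F (Shift u))) (Reset (subst u 0 (Lam (Reset (plug_fresh F)))))"
        using simc_pure[OF Fu(2)] by (auto intro: stShift)
      finally show ?thesis using h Fu by (auto intro!: sim_simc.sReset subst0_sim lam_sim)
    qed
  next
    case (sA F G a1 b1)
    have pG: "is_pure F" "is_pure G" using simc_pure sA by auto
    define L where "L = Lam (Reset (plug_fresh F))"
    show ?thesis
    proof (cases "is_val b1")
      case True
      obtain a1v where a1: "st\<^sup>*\<^sup>* a1 a1v" "is_val a1v" "sim a1v b1" using val_rev sA True by blast
      have "st\<^sup>*\<^sup>* a (Reset (App L a1v))"
        unfolding sA(1) L_def using sts_plug[OF a1(1), of "CReset (CArg (Lam (Reset (plug_fresh F))) Hole)"] by simp
      also have "st (Reset (App L a1v)) (Reset (Reset (plug F a1v)))"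
        unfolding L_def by (rule beta_fresh[OF a1(2)])
      finally have s1: "st\<^sup>*\<^sup>* a (Reset (Reset (plug F a1v)))" .
      have "sim (plug F a1v) (plug G b1)" using sim_plug sA a1 by blast
      from Bc[OF this] sA obtain a' where "st\<^sup>*\<^sup>* (Reset (Reset (plug F a1v))) a'" "sim a' b'" by blast
      then show ?thesis using s1 by (meson rtranclp_trans)
    next
      case False
      have nv: "\<not> is_val a1" using sim_val sA False by blast
      from stReset_inv[OF less.prems(2)[unfolded sA(2)]] show ?thesis
      proof (elim disjE exE conjE)
        fix c assume h: "st (plug G b1) c" "b' = Reset c"
        from st_plug_nonval[OF pG(2) False h(1)] obtain b1' where b1: "st b1 b1'" "c = plug G b1'" by blast
        have "size b1 < size b" using sA size_plug[of b1 G] by simp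
        from less.IH[OF this] sA b1 obtain a1' where a1: "st\<^sup>*\<^sup>* a1 a1'" "sim a1' b1'" by blast
        have "st\<^sup>*\<^sup>* a (Reset (App L a1'))"
          unfolding sA(1) L_def using sts_plug[OF a1(1), of "CReset (CArg (Lam (Reset (plug_fresh F))) Hole)"] by simp
        then show ?thesis using h b1 a1 sA unfolding L_def by (auto intro: sim_simc.sA)
      next
        assume "is_val (plug G b1)" then show ?thesis using False plug_val by blast
      next
        fix G' u' assume h: "is_pure G'" "plug G b1 = plug G' (Shift u')"
          "b' = Reset (subst u' 0 (Lam (Reset (plug_fresh G'))))"
        have "atomic (Shift u')" by (simp add: atomic_def)
        from decomp[OF pG(2) False pure_ectx[OF h(1)] this h(2)] obtain G3 where
          G3: "G' = ctx_comp G G3" "b1 = plug G3 (Shift u')" by blast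
        have pG3: "is_pure G3" using h(1) G3 by simp
        have "sim a1 (plug G3 (Shift u'))" using sA G3 by simp
        from D2[OF pG3 this] obtain F3 u where F3: "st\<^sup>*\<^sup>* a1 (plug F3 (Shift u))" "simc F3 G3" "sim u u'" by blast
        have "st\<^sup>*\<^sup>* a (Reset (App L (plug F3 (Shift u))))"
          unfolding sA(1) L_def using sts_plug[OF F3(1), of "CReset (CArg (Lam (Reset (plug_fresh F))) Hole)"] by simp
        also have "st (Reset (App L (plug F3 (Shift u)))) (Reset (subst u 0 (Lam (Reset (plug_fresh (CArg L F3))))))"
          using stShift[of "CArg L F3" u] simc_pure[OF F3(2)] by (simp add: L_def)
        finally have s: "st\<^sup>*\<^sup>* a (Reset (subst u 0 (Lam (Reset (plug_fresh (CArg L F3))))))" .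
        have k: "sim (Lam (Reset (plug_fresh (CArg L F3)))) (Lam (Reset (plug_fresh (ctx_comp G G3))))"
          unfolding L_def using key2[OF \<open>simc F G\<close> F3(2)] .
        have "sim (Reset (subst u 0 (Lam (Reset (plug_fresh (CArg L F3)))))) b'"
          unfolding h(3) G3(1) by (rule sim_simc.sReset[OF subst0_sim[OF k _ _ F3(3)]]) simp_all
        then show ?thesis using s by blast
      qed
    qed
  qed
qed



lemma ctx_comp_assoc[simp]: "ctx_comp (ctx_comp A B) C = ctx_comp A (ctx_comp B C)"
  by (induction A) auto

lemma sime_ctx_rel: "sime E E' \<Longrightarrow> ctx_rel sim E E'"
proof (induction rule: sime.induct)
  case eHole
  then show ?case unfolding ctx_rel_def by (auto intro: sVar)
next
  case (eArg v w E E')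
  from eArg.IH[unfolded ctx_rel_def] show ?case
  proof (elim disjE exE conjE)
    fix E0' F0 E1' F1 assume h: "is_ectx E0'" "is_pure F0" "is_ectx E1'" "is_pure F1" "E = ctx_comp E0' (CReset F0)"
      "E' = ctx_comp E1' (CReset F1)" "sim (plug_fresh E0') (plug_fresh E1')" "sim (Reset (plug_fresh F0)) (Reset (plug_fresh F1))"
    show ?thesis unfolding ctx_rel_def
      apply (rule disjI1, rule exI[of _ "CArg v E0'"], rule exI[of _ F0], rule exI[of _ "CArg w E1'"], rule exI[of _ F1])
      using h eArg.hyps by (auto intro: sApp sim_lift)
  next
    assume "is_pure E" "is_pure E'" "sim (plug_fresh E) (plug_fresh E')"
    then show ?thesis unfolding ctx_rel_def using eArg.hyps by (auto intro: sApp sim_lift)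
  qed
next
  case (eFun E E' u u')
  from eFun.IH[unfolded ctx_rel_def] show ?case
  proof (elim disjE exE conjE)
    fix E0' F0 E1' F1 assume h: "is_ectx E0'" "is_pure F0" "is_ectx E1'" "is_pure F1" "E = ctx_comp E0' (CReset F0)"
      "E' = ctx_comp E1' (CReset F1)" "sim (plug_fresh E0') (plug_fresh E1')" "sim (Reset (plug_fresh F0)) (Reset (plug_fresh F1))"
    show ?thesis unfolding ctx_rel_def
      apply (rule disjI1, rule exI[of _ "CFun E0' u"], rule exI[of _ F0], rule exI[of _ "CFun E1' u'"], rule exI[of _ F1])
      using h eFun.hyps by (auto intro: sApp sim_lift)
  next
    assume "is_pure E" "is_pure E'" "sim (plug_fresh E) (plug_fresh E')"
    then show ?thesis unfolding ctx_rel_def using eFun.hyps by (auto intro: sApp sim_lift)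
  qed
next
  case (eReset E E')
  from eReset.IH[unfolded ctx_rel_def] show ?case
  proof (elim disjE exE conjE)
    fix E0' F0 E1' F1 assume h: "is_ectx E0'" "is_pure F0" "is_ectx E1'" "is_pure F1" "E = ctx_comp E0' (CReset F0)"
      "E' = ctx_comp E1' (CReset F1)" "sim (plug_fresh E0') (plug_fresh E1')" "sim (Reset (plug_fresh F0)) (Reset (plug_fresh F1))"
    show ?thesis unfolding ctx_rel_def
      apply (rule disjI1, rule exI[of _ "CReset E0'"], rule exI[of _ F0], rule exI[of _ "CReset E1'"], rule exI[of _ F1])
      using h by (auto intro: sReset)
  next
    assume h: "is_pure E" "is_pure E'" "sim (plug_fresh E) (plug_fresh E')"
    show ?thesis unfolding ctx_rel_def
      apply (rule disjI1, rule exI[of _ Hole], rule exI[of _ E], rule exI[of _ Hole], rule exI[of _ E'])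
      using h by (auto intro: sReset sVar pure_ectx)
  qed
next
  case (eA F G E E')
  have pF: "is_pure F" "is_pure G" using simc_pure eA.hyps(1) by auto
  define L where "L = Lam (Reset (plug_fresh F))"
  from eA.IH[unfolded ctx_rel_def] show ?case
  proof (elim disjE exE conjE)
    fix E0' F0 E1' F1 assume h: "is_ectx E0'" "is_pure F0" "is_ectx E1'" "is_pure F1" "E = ctx_comp E0' (CReset F0)"
      "E' = ctx_comp E1' (CReset F1)" "sim (plug_fresh E0') (plug_fresh E1')" "sim (Reset (plug_fresh F0)) (Reset (plug_fresh F1))"
    have k: "sim (plug_fresh (CReset (CArg L E0'))) (plug_fresh (CReset (ctx_comp G E1')))"
      using key[OF eA.hyps(1) h(7)] by (simp add: pf_comp L_def)
    show ?thesis unfolding ctx_rel_def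
      apply (rule disjI1, rule exI[of _ "CReset (CArg L E0')"], rule exI[of _ F0], rule exI[of _ "CReset (ctx_comp G E1')"], rule exI[of _ F1])
      using h pF k by (simp add: L_def pure_ectx)
  next
    assume h: "is_pure E" "is_pure E'" "sim (plug_fresh E) (plug_fresh E')"
    have k: "sim (Reset (plug_fresh (CArg L E))) (Reset (plug_fresh (ctx_comp G E')))"
      using key[OF eA.hyps(1) h(3)] by (simp add: pf_comp L_def)
    show ?thesis unfolding ctx_rel_def
      apply (rule disjI1, rule exI[of _ Hole], rule exI[of _ "CArg L E"], rule exI[of _ Hole], rule exI[of _ "ctx_comp G E'"])
      using h pF k by (simp add: L_def sVar)
  qed
next
  case (eB E E')
  from eB.IH[unfolded ctx_rel_def] show ?case
  proof (elim disjE exE conjE)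
    fix E0' F0 E1' F1 assume h: "is_ectx E0'" "is_pure F0" "is_ectx E1'" "is_pure F1" "E = ctx_comp E0' (CReset F0)"
      "E' = ctx_comp E1' (CReset F1)" "sim (plug_fresh E0') (plug_fresh E1')" "sim (Reset (plug_fresh F0)) (Reset (plug_fresh F1))"
    show ?thesis unfolding ctx_rel_def
      apply (rule disjI1, rule exI[of _ "CReset (CReset E0')"], rule exI[of _ F0], rule exI[of _ "CReset E1'"], rule exI[of _ F1])
      using h by (auto intro: sB)
  next
    assume h: "is_pure E" "is_pure E'" "sim (plug_fresh E) (plug_fresh E')"
    show ?thesis unfolding ctx_rel_def
      apply (rule disjI1, rule exI[of _ "CReset Hole"], rule exI[of _ E], rule exI[of _ Hole], rule exI[of _ E'])
      using h by (auto intro: sReset sVar sC pure_ectx)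
  qed
qed


lemma ctx_rel_sym: "ctx_rel R E0 E1 \<Longrightarrow> ctx_rel R\<inverse>\<inverse> E1 E0"
proof -
  assume "ctx_rel R E0 E1"
  from this[unfolded ctx_rel_def] show ?thesis
  proof (elim disjE exE conjE)
    fix E0' F0 E1' F1 assume h: "is_ectx E0'" "is_pure F0" "is_ectx E1'" "is_pure F1" "E0 = ctx_comp E0' (CReset F0)"
      "E1 = ctx_comp E1' (CReset F1)" "R (plug_fresh E0') (plug_fresh E1')" "R (Reset (plug_fresh F0)) (Reset (plug_fresh F1))"
    show ?thesis unfolding ctx_rel_def
      apply (rule disjI1, rule exI[of _ E1'], rule exI[of _ F1], rule exI[of _ E0'], rule exI[of _ F0])
      using h by simp
  next
    assume "is_pure E0" "is_pure E1" "R (plug_fresh E0) (plug_fresh E1)"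
    then show ?thesis unfolding ctx_rel_def by simp
  qed
qed

lemma val_rel_sym: "val_rel R E0 E1 \<Longrightarrow> val_rel R\<inverse>\<inverse> E1 E0"
  unfolding val_rel_def by simp

lemma nf_sym: "nf_rel R a b \<Longrightarrow> nf_rel R\<inverse>\<inverse> b a"
proof -
  assume "nf_rel R a b"
  from this[unfolded nf_rel_def] show ?thesis
  proof (elim disjE exE conjE)
    assume "val_rel R a b" then show ?thesis unfolding nf_rel_def using val_rel_sym by (intro disjI1) blast
  next
    fix F0 t0 F1 t1 assume h: "is_pure F0" "is_pure F1" "a = plug F0 (Shift t0)" "b = plug F1 (Shift t1)"
      "ctx_rel R F0 F1" "R (Reset t0) (Reset t1)"
    show ?thesis unfolding nf_rel_def
      apply (rule disjI2, rule disjI1)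
      apply (rule exI[of _ F1], rule exI[of _ t1], rule exI[of _ F0], rule exI[of _ t0])
      using h ctx_rel_sym[OF h(5)] by simp
  next
    fix E0 x v0 E1 v1 assume h: "is_ectx E0" "is_ectx E1" "a = plug E0 (App (Var x) v0)" "b = plug E1 (App (Var x) v1)"
      "ctx_rel R E0 E1" "val_rel R v0 v1"
    show ?thesis unfolding nf_rel_def
      apply (rule disjI2, rule disjI2)
      apply (rule exI[of _ E1], rule exI[of _ x], rule exI[of _ v1], rule exI[of _ E0], rule exI[of _ v0])
      using h ctx_rel_sym[OF h(5)] val_rel_sym[OF h(6)] by simp
  qed
qed

lemma nf_fwd: "sim a b \<Longrightarrow> \<not>(\<exists>u. st a u) \<Longrightarrow> \<not>(\<exists>u. st b u) \<and> nf_rel sim a b"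
proof -
  assume s: "sim a b" and n: "\<not>(\<exists>u. st a u)"
  from irred_cases[OF n] show ?thesis
  proof (elim disjE)
    assume v: "is_val a"
    then have "is_val b" using s sim_val by blast
    have "val_rel sim a b" unfolding val_rel_def using v \<open>is_val b\<close> s app_fresh_sim by blast
    then show ?thesis using \<open>is_val b\<close> no_st_val unfolding nf_rel_def by blast
  next
    assume "ctrl a"
    then obtain F u where F: "is_pure F" "a = plug F (Shift u)" by (auto simp: ctrl_def)
    from D1[OF F(1)] s F obtain G u' where G: "b = plug G (Shift u')" "simc F G" "sim u u'" by blast
    have pG: "is_pure G" using simc_pure G by blast
    have c: "ctx_rel sim F G" unfolding ctx_rel_def using F pG G simc_fresh by blast
    have "nf_rel sim a b" unfolding nf_rel_def
      apply (rule disjI2, rule disjI1, rule exI[of _ F], rule exI[of _ u], rule exI[of _ G], rule exI[of _ u'])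
      using F G pG c sReset by blast
    then show ?thesis using ctrl_irred G pG by blast
  next
    assume "opn a"
    then obtain E x v where E: "is_ectx E" "is_val v" "a = plug E (App (Var x) v)" by (auto simp: opn_def)
    from D3[OF s E(1,2,3)] obtain E' v' where E': "b = plug E' (App (Var x) v')" "sime E E'" "sim v v'" "is_val v'"
      by blast
    have "is_ectx E'" using sime_ectx E' by blast
    have c: "ctx_rel sim E E'" using sime_ctx_rel E' by blast
    have vr: "val_rel sim v v'" unfolding val_rel_def using E E' app_fresh_sim by blast
    have "nf_rel sim a b" unfolding nf_rel_def
      apply (rule disjI2, rule disjI2, rule exI[of _ E], rule exI[of _ x], rule exI[of _ v], rule exI[of _ E'], rule exI[of _ v'])
      using E E' c vr \<open>is_ectx E'\<close> by blast
    then show ?thesis using open_irred E' \<open>is_ectx E'\<close> by blast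
  qed
qed

lemma nf_rev: "sim a b \<Longrightarrow> \<not>(\<exists>u. st b u) \<Longrightarrow> \<exists>a'. st\<^sup>*\<^sup>* a a' \<and> \<not>(\<exists>u. st a' u) \<and> sim a' b"
proof -
  assume s: "sim a b" and n: "\<not>(\<exists>u. st b u)"
  from irred_cases[OF n] show ?thesis
  proof (elim disjE)
    assume "is_val b" then show ?thesis using val_rev[OF s] no_st_val by blast
  next
    assume "ctrl b"
    then obtain G u' where G: "is_pure G" "b = plug G (Shift u')" by (auto simp: ctrl_def)
    from D2[OF G(1)] s G obtain F u where "st\<^sup>*\<^sup>* a (plug F (Shift u))" "simc F G" "sim u u'" by blast
    then show ?thesis using ctrl_irred simc_pure G sim_plug[of F G "Shift u" "Shift u'"] sShift by blast
  next
    assume "opn b"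
    from D4[OF s this] show ?thesis using irred_iff by blast
  qed
qed

lemma eval_st: "eval t t' \<longleftrightarrow> st\<^sup>*\<^sup>* t t' \<and> \<not>(\<exists>u. st t' u)"
  unfolding eval_def irreducible_def step_eq by simp

lemma sim_eval1: "st\<^sup>*\<^sup>* t0 t0' \<Longrightarrow> \<not>(\<exists>u. st t0' u) \<Longrightarrow> sim t0 t1 \<Longrightarrow>
  \<exists>t1'. st\<^sup>*\<^sup>* t1 t1' \<and> \<not>(\<exists>u. st t1' u) \<and> nf_rel sim t0' t1'"
proof (induction arbitrary: t1 rule: converse_rtranclp_induct)
  case base
  from nf_fwd[OF base.prems(2) base.prems(1)] show ?case by (intro exI[of _ t1]) simp
next
  case (step y z)
  from S1[OF step.prems(2) step.hyps(1)] obtain b' where b': "st\<^sup>*\<^sup>* t1 b'" "sim z b'" by blast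
  from step.IH[OF step.prems(1) b'(2)] obtain t1' where "st\<^sup>*\<^sup>* b' t1'" "\<not>(\<exists>u. st t1' u)" "nf_rel sim t0' t1'"
    by blast
  then show ?case using rtranclp_trans[OF b'(1)] by blast
qed

lemma sim_eval2: "st\<^sup>*\<^sup>* t0 t0' \<Longrightarrow> \<not>(\<exists>u. st t0' u) \<Longrightarrow> sim t1 t0 \<Longrightarrow>
  \<exists>t1'. st\<^sup>*\<^sup>* t1 t1' \<and> \<not>(\<exists>u. st t1' u) \<and> nf_rel sim\<inverse>\<inverse> t0' t1'"
proof (induction arbitrary: t1 rule: converse_rtranclp_induct)
  case base
  from nf_rev[OF base.prems(2) base.prems(1)] obtain a' where a': "st\<^sup>*\<^sup>* t1 a'" "\<not>(\<exists>u. st a' u)" "sim a' t0'"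
    by blast
  from nf_fwd[OF a'(3) a'(2)] have "nf_rel sim a' t0'" by blast
  from nf_sym[OF this] a' show ?case by blast
next
  case (step y z)
  from S2[OF step.prems(2) step.hyps(1)] obtain a' where a': "st\<^sup>*\<^sup>* t1 a'" "sim a' z" by blast
  from step.IH[OF step.prems(1) a'(2)] obtain t1' where "st\<^sup>*\<^sup>* a' t1'" "\<not>(\<exists>u. st t1' u)" "nf_rel sim\<inverse>\<inverse> t0' t1'"
    by blast
  then show ?case using rtranclp_trans[OF a'(1)] by blast
qed

lemma bisim: "nf_bisimulation sim"
  unfolding nf_bisimulation_def nf_simulation_def eval_st
  using sim_eval1 sim_eval2 by auto

theorem proposition5:
  fixes F :: ctx and t :: trm
  assumes "is_pure F"
  shows "Reset (App (Lam (Reset (plug_fresh F))) t) \<approx>nf Reset (plug F t)"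
  unfolding nf_bisimilar_def
  using bisim sA[OF simc_refl[OF assms] sim_refl[of t]] by blast



end
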